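(* Let $w(x)=\sup_{\tau}\limsup_{T\to\infty}\mathbb E^x\{\int_0^{\tau\wedge T}f(X_s)\,ds+g(X_{\tau\wedge T})\}$. If $\mu(f)>0$, then $w(x)=\infty$ for all $x\in E$ and it is optimal to take $\tau=\infty$, $\mathbb P^x$-a.s., for every $x\in E$.
   Context: $E$ is a locally compact separable metric space in which every closed ball is compact. $(X_t)$ is a right-continuous time-homogeneous Markov process on $E$ with laws $\mathbb P^x$, expectations $\mathbb E^x$, transition probabilities $P_t(x,\cdot)$, which is ergodic: there is a unique probability measure $\mu$ with $\lim_{t\to\infty}\|P_t(x,\cdot)-\mu\|_{TV}=0$ for all $x$. $f,g:E\to\mathbb R$ are continuous and bounded; $\mu(f)=\int f\,d\mu$. Stopping times may be infinite. *)

theory Defs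
  imports "HOL-Probability.Probability"
begin

definition tv_dist :: "'a measure \<Rightarrow> 'a measure \<Rightarrow> real" where
  "tv_dist M N = (SUP A\<in>sets M. \<bar>measure M A - measure N A\<bar>)"

definition is_filtration :: "'w measure \<Rightarrow> (real \<Rightarrow> 'w measure) \<Rightarrow> bool" where
  "is_filtration M F \<longleftrightarrow>
     (\<forall>t. space (F t) = space M \<and> sets (F t) \<subseteq> sets M) \<and>
     (\<forall>s t. 0 \<le> s \<longrightarrow> s \<le> t \<longrightarrow> sets (F s) \<subseteq> sets (F t))"

definition stopping_time_ext :: "'w measure \<Rightarrow> (real \<Rightarrow> 'w measure) \<Rightarrow> ('w \<Rightarrow> ereal) \<Rightarrow> bool" where
  "stopping_time_ext M F \<tau> \<longleftrightarrow>
     (\<forall>\<omega>. 0 \<le> \<tau> \<omega>) \<and>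
     (\<forall>t\<ge>0. {\<omega>\<in>space M. \<tau> \<omega> \<le> ereal t} \<in> sets (F t))"

definition trans_prob :: "('e \<Rightarrow> 'w measure) \<Rightarrow> (real \<Rightarrow> 'w \<Rightarrow> 'e::topological_space)
    \<Rightarrow> real \<Rightarrow> 'e \<Rightarrow> 'e measure" where
  "trans_prob P X t x = distr (P x) borel (X t)"

definition rc_markov_process ::
  "'w measure \<Rightarrow> (real \<Rightarrow> 'w measure) \<Rightarrow> ('e::topological_space \<Rightarrow> 'w measure)
     \<Rightarrow> (real \<Rightarrow> 'w \<Rightarrow> 'e) \<Rightarrow> bool" where
  "rc_markov_process M F P X \<longleftrightarrow>
     is_filtration M F \<and>
     (\<forall>x. prob_space (P x) \<and> sets (P x) = sets M) \<and>
     (\<forall>t\<ge>0. X t \<in> measurable (F t) borel) \<and>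
     (\<forall>\<omega>\<in>space M. \<forall>t\<ge>0. continuous (at_right t) (\<lambda>s. X s \<omega>)) \<and>
     (\<forall>x. AE \<omega> in P x. X 0 \<omega> = x) \<and>
     (\<forall>s\<ge>0. \<forall>A\<in>sets borel. (\<lambda>y. measure (P y) {\<omega>\<in>space M. X s \<omega> \<in> A}) \<in> borel_measurable borel) \<and>
     (\<forall>x s t A B. 0 \<le> s \<longrightarrow> 0 \<le> t \<longrightarrow> A \<in> sets borel \<longrightarrow> B \<in> sets (F t) \<longrightarrow>
        measure (P x) (B \<inter> {\<omega>\<in>space M. X (t + s) \<omega> \<in> A}) =
        (\<integral>\<omega>. indicator B \<omega> * measure (P (X t \<omega>)) {\<omega>'\<in>space M. X s \<omega>' \<in> A} \<partial>P x))"

definition ergodic_with :: "('e \<Rightarrow> 'w measure) \<Rightarrow> (real \<Rightarrow> 'w \<Rightarrow> 'e::topological_space)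
    \<Rightarrow> 'e measure \<Rightarrow> bool" where
  "ergodic_with P X \<mu> \<longleftrightarrow> prob_space \<mu> \<and> sets \<mu> = sets borel \<and>
     (\<forall>x. ((\<lambda>t. tv_dist (trans_prob P X t x) \<mu>) \<longlongrightarrow> 0) at_top)"

definition reward :: "('e \<Rightarrow> 'w measure) \<Rightarrow> (real \<Rightarrow> 'w \<Rightarrow> 'e) \<Rightarrow> ('e \<Rightarrow> real) \<Rightarrow> ('e \<Rightarrow> real)
    \<Rightarrow> 'e \<Rightarrow> ('w \<Rightarrow> ereal) \<Rightarrow> real \<Rightarrow> real" where
  "reward P X f g x \<tau> T =
     (\<integral>\<omega>. (LBINT s=0..real_of_ereal (min (\<tau> \<omega>) (ereal T)). f (X s \<omega>))
           + g (X (real_of_ereal (min (\<tau> \<omega>) (ereal T))) \<omega>) \<partial>P x)"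

definition stop_value where
  "stop_value P X f g x \<tau> = Limsup at_top (\<lambda>T. ereal (reward P X f g x \<tau> T))"

definition value_fun where
  "value_fun M F P X f g x = (SUP \<tau>\<in>{\<tau>. stopping_time_ext M F \<tau>}. stop_value P X f g x \<tau>)"

end

theory Submission
  imports Defs
begin


lemma staircase:
  fixes a b v :: real and N :: nat
  assumes "a \<le> v" "v \<le> b" "N > 0"
  shows "a + (b - a)/N * card {k\<in>{1..N}. a + real k * ((b - a)/N) \<le> v} \<le> v \<and>
         v \<le> a + (b - a)/N * card {k\<in>{1..N}. a + real k * ((b - a)/N) \<le> v} + (b - a)/N"
proof (cases "a = b")
  case True
  then show ?thesis using assms by auto
next
  case False
  define h where "h = (b - a)/N"
  have h: "h > 0" using False assms by (auto simp: h_def)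
  have bN: "b - a = N * h" using assms by (simp add: h_def)
  define j where "j = min N (nat \<lfloor>(v - a)/h\<rfloor>)"
  have fl: "\<lfloor>(v - a)/h\<rfloor> \<ge> 0" using h assms by simp
  have S: "{k\<in>{1..N}. a + real k * h \<le> v} = {1..j}"
  proof (intro set_eqI iffI)
    fix k assume "k \<in> {k\<in>{1..N}. a + real k * h \<le> v}"
    then have k: "1 \<le> k" "k \<le> N" "real k \<le> (v - a)/h" using h by (auto simp: field_simps)
    then have "int k \<le> \<lfloor>(v - a)/h\<rfloor>" by (simp add: le_floor_iff)
    then show "k \<in> {1..j}" using k fl by (auto simp: j_def)
  next
    fix k assume "k \<in> {1..j}"
    then have k: "1 \<le> k" "k \<le> N" "int k \<le> \<lfloor>(v - a)/h\<rfloor>" using fl by (auto simp: j_def)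
    then have "real k \<le> (v - a)/h" by (simp add: le_floor_iff)
    then show "k \<in> {k\<in>{1..N}. a + real k * h \<le> v}" using k h by (auto simp: field_simps)
  qed
  have c1: "real j * h \<le> v - a"
  proof -
    have "int j \<le> \<lfloor>(v - a)/h\<rfloor>" using fl by (simp add: j_def min_def le_nat_iff)
    then have "real j \<le> (v - a)/h" by (simp add: le_floor_iff)
    then show ?thesis using h by (simp add: field_simps)
  qed
  have c2: "v - a \<le> real j * h + h"
  proof (cases "j = N")
    case True then show ?thesis using assms bN h by simp
  next
    case False
    then have "j = nat \<lfloor>(v - a)/h\<rfloor>" by (auto simp: j_def)
    then have "real j = of_int \<lfloor>(v - a)/h\<rfloor>" using fl by simp
    moreover have "(v - a)/h < of_int \<lfloor>(v - a)/h\<rfloor> + 1" by linarith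
    ultimately have "(v - a)/h \<le> real j + 1" by simp
    then show ?thesis using h by (simp add: field_simps)
  qed
  show ?thesis unfolding h_def[symmetric] S using c1 c2 by (simp add: algebra_simps)
qed

lemma tv_bound:
  fixes f :: "'a \<Rightarrow> real" and N :: nat
  assumes "prob_space \<nu>" "prob_space \<mu>" "sets \<nu> = sets \<mu>"
    and fm: "f \<in> borel_measurable \<mu>" and fb: "\<And>y. a \<le> f y \<and> f y \<le> b" and N: "N > 0"
    and d: "\<And>A. A \<in> sets \<mu> \<Longrightarrow> measure \<mu> A - measure \<nu> A \<le> d"
  shows "(\<integral>y. f y \<partial>\<mu>) \<le> (\<integral>y. f y \<partial>\<nu>) + (b - a) * d + (b - a)/N"
proof -
  interpret n: prob_space \<nu> by fact
  interpret m: prob_space \<mu> by fact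
  define h where "h = (b - a)/N"
  have h0: "h \<ge> 0" using fb[of undefined] by (auto simp: h_def)
  have sp: "space \<nu> = space \<mu>" using assms(3) by (rule sets_eq_imp_space_eq)
  have fm': "f \<in> borel_measurable \<nu>" using fm assms(3) by (simp cong: measurable_cong_sets)
  define A where "A k = {y\<in>space \<mu>. a + real k * h \<le> f y}" for k :: nat
  have A: "A k \<in> sets \<mu>" for k unfolding A_def using fm by measurable
  have A': "A k \<in> sets \<nu>" for k using A assms(3) by simp
  define G where "G y = a + (\<Sum>k\<in>{1..N}. h * indicator (A k) y)" for y
  have Geq: "G y = a + h * card {k\<in>{1..N}. a + real k * h \<le> f y}" if "y \<in> space \<mu>" for y
  proof -
    have "(\<Sum>k\<in>{1..N}. h * indicator (A k) y) = (\<Sum>k\<in>{1..N}. if a + real k * h \<le> f y then h else 0)"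
      using that by (intro sum.cong) (auto simp: A_def)
    also have "\<dots> = (\<Sum>k\<in>{k\<in>{1..N}. a + real k * h \<le> f y}. h)"
      by (rule sum.inter_filter[symmetric]) simp
    finally show ?thesis by (simp add: G_def)
  qed
  have Gb: "G y \<le> f y \<and> f y \<le> G y + h" if "y \<in> space \<mu>" for y
    using staircase[OF _ _ N, of a "f y" b] fb[of y] Geq[OF that] by (simp add: h_def)
  have fbb: "\<bar>f y\<bar> \<le> \<bar>a\<bar> + \<bar>b\<bar>" for y using fb[of y] by (smt (verit))
  have fi: "integrable \<mu> f"
    by (rule m.integrable_const_bound[where B="\<bar>a\<bar> + \<bar>b\<bar>"]) (use fbb fm in auto)
  have fi': "integrable \<nu> f"
    by (rule n.integrable_const_bound[where B="\<bar>a\<bar> + \<bar>b\<bar>"]) (use fbb fm' in auto)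
  have Ii: "integrable \<mu> (indicator (A k) :: _ \<Rightarrow> real)" for k by (rule integrable_real_indicator[OF A]) (simp add: less_top[symmetric] m.emeasure_finite)
  have Ii': "integrable \<nu> (indicator (A k) :: _ \<Rightarrow> real)" for k by (rule integrable_real_indicator[OF A']) (simp add: less_top[symmetric] n.emeasure_finite)
  have Gi: "integrable \<mu> G" unfolding G_def by (intro Bochner_Integration.integrable_add m.integrable_const Bochner_Integration.integrable_sum Bochner_Integration.integrable_mult_right Ii)
  have Gi': "integrable \<nu> G" unfolding G_def by (intro Bochner_Integration.integrable_add n.integrable_const Bochner_Integration.integrable_sum Bochner_Integration.integrable_mult_right Ii')
  have IG: "(\<integral>y. G y \<partial>\<mu>) = a + (\<Sum>k\<in>{1..N}. h * measure \<mu> (A k))"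
  proof -
    have "(\<integral>y. (\<Sum>k\<in>{1..N}. h * indicator (A k) y) \<partial>\<mu>) = (\<Sum>k\<in>{1..N}. (\<integral>y. h * indicator (A k) y \<partial>\<mu>))"
      by (rule Bochner_Integration.integral_sum) (intro Bochner_Integration.integrable_mult_right Ii)
    also have "\<dots> = (\<Sum>k\<in>{1..N}. h * measure \<mu> (A k))"
      by (intro sum.cong refl) (simp add: A sets.Int_space_eq2)
    finally have *: "(\<integral>y. (\<Sum>k\<in>{1..N}. h * indicator (A k) y) \<partial>\<mu>) = (\<Sum>k\<in>{1..N}. h * measure \<mu> (A k))" .
    have "(\<integral>y. G y \<partial>\<mu>) = (\<integral>y. a \<partial>\<mu>) + (\<integral>y. (\<Sum>k\<in>{1..N}. h * indicator (A k) y) \<partial>\<mu>)"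
      unfolding G_def by (intro Bochner_Integration.integral_add m.integrable_const Bochner_Integration.integrable_sum Bochner_Integration.integrable_mult_right Ii)
    then show ?thesis unfolding * by (simp add: m.prob_space n.prob_space)
  qed
  have IG': "(\<integral>y. G y \<partial>\<nu>) = a + (\<Sum>k\<in>{1..N}. h * measure \<nu> (A k))"
  proof -
    have "(\<integral>y. (\<Sum>k\<in>{1..N}. h * indicator (A k) y) \<partial>\<nu>) = (\<Sum>k\<in>{1..N}. (\<integral>y. h * indicator (A k) y \<partial>\<nu>))"
      by (rule Bochner_Integration.integral_sum) (intro Bochner_Integration.integrable_mult_right Ii')
    also have "\<dots> = (\<Sum>k\<in>{1..N}. h * measure \<nu> (A k))"
      by (intro sum.cong refl) (simp add: A' sets.Int_space_eq2)
    finally have *: "(\<integral>y. (\<Sum>k\<in>{1..N}. h * indicator (A k) y) \<partial>\<nu>) = (\<Sum>k\<in>{1..N}. h * measure \<nu> (A k))" .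
    have "(\<integral>y. G y \<partial>\<nu>) = (\<integral>y. a \<partial>\<nu>) + (\<integral>y. (\<Sum>k\<in>{1..N}. h * indicator (A k) y) \<partial>\<nu>)"
      unfolding G_def by (intro Bochner_Integration.integral_add n.integrable_const Bochner_Integration.integrable_sum Bochner_Integration.integrable_mult_right Ii')
    then show ?thesis unfolding * by (simp add: m.prob_space n.prob_space)
  qed
  have "(\<integral>y. f y \<partial>\<mu>) \<le> (\<integral>y. G y + h \<partial>\<mu>)"
    by (rule integral_mono) (use fi Gi Gb in auto)
  also have "\<dots> = (\<integral>y. G y \<partial>\<mu>) + h" using Gi by (simp add: m.prob_space)
  also have "(\<integral>y. G y \<partial>\<mu>) = (\<integral>y. G y \<partial>\<nu>) + (\<Sum>k\<in>{1..N}. h * (measure \<mu> (A k) - measure \<nu> (A k)))"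
    unfolding IG IG' by (simp add: sum_subtractf algebra_simps)
  also have "(\<Sum>k\<in>{1..N}. h * (measure \<mu> (A k) - measure \<nu> (A k))) \<le> (\<Sum>k\<in>{1..N}. h * d)"
    by (intro sum_mono mult_left_mono d A h0)
  also have "(\<integral>y. G y \<partial>\<nu>) \<le> (\<integral>y. f y \<partial>\<nu>)"
    by (rule integral_mono) (use fi' Gi' Gb sp in auto)
  finally show ?thesis using N by (simp add: h_def)
qed



lemma dyadic_tendsto: "(\<lambda>n::nat. real_of_int \<lceil>2^n * s\<rceil> / 2^n) \<longlonglongrightarrow> s"
proof (rule tendsto_sandwich[of "\<lambda>n. s" _ _ "\<lambda>n. s + (1/2)^n"])
  show "\<forall>\<^sub>F n in sequentially. s \<le> real_of_int \<lceil>2^n * s\<rceil> / 2^n"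
    by (auto simp: field_simps)
  show "\<forall>\<^sub>F n in sequentially. real_of_int \<lceil>2^n * s\<rceil> / 2^n \<le> s + (1/2)^n"
  proof (intro always_eventually allI)
    fix n :: nat
    have "real_of_int \<lceil>2^n * s\<rceil> \<le> 2^n * s + 1" by linarith
    then show "real_of_int \<lceil>2^n * s\<rceil> / 2^n \<le> s + (1/2)^n"
      by (simp add: field_simps power_divide)
  qed
  show "(\<lambda>n. s + (1/2::real)^n) \<longlonglongrightarrow> s"
    using tendsto_add[OF tendsto_const LIMSEQ_realpow_zero[of "1/2::real"]] by simp
qed simp

lemma rc_seq:
  fixes G :: "real \<Rightarrow> 'e::topological_space"
  assumes "continuous (at_right s) G"
  shows "(\<lambda>n::nat. G (real_of_int \<lceil>2^n * s\<rceil> / 2^n)) \<longlonglongrightarrow> G s"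
proof -
  have c: "continuous (at s within {s..}) G" using assms by (simp add: at_within_Ici_at_right)
  have "(G \<circ> (\<lambda>n::nat. real_of_int \<lceil>2^n * s\<rceil> / 2^n)) \<longlonglongrightarrow> G s"
    using c[unfolded continuous_within_sequentially] dyadic_tendsto[of s]
    by (auto simp: field_simps)
  then show ?thesis by (simp add: comp_def)
qed

lemma joint_meas:
  fixes X :: "real \<Rightarrow> 'w \<Rightarrow> 'e::metric_space" and h :: "'e \<Rightarrow> real"
  assumes Xm: "\<And>t. t \<ge> 0 \<Longrightarrow> X t \<in> borel_measurable M"
    and rc: "\<And>\<omega> t. \<omega> \<in> space M \<Longrightarrow> t \<ge> 0 \<Longrightarrow> continuous (at_right t) (\<lambda>s. X s \<omega>)"
    and hc: "continuous_on UNIV h"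
  shows "(\<lambda>z. h (X (max 0 (fst z)) (snd z))) \<in> borel_measurable ((lborel::real measure) \<Otimes>\<^sub>M M)"
proof (rule borel_measurable_LIMSEQ_real)
  have hm: "h \<in> borel_measurable borel" using hc by (rule borel_measurable_continuous_onI)
  define H where "H n k z = h (X (max 0 (real_of_int k / 2^n)) (snd z))" for n :: nat and k :: int and z :: "real \<times> 'w"
  define u where "u n z = H n \<lceil>2^n * max 0 (fst z)\<rceil> z" for n :: nat and z
  show "u n \<in> borel_measurable ((lborel::real measure) \<Otimes>\<^sub>M M)" for n
    unfolding u_def
  proof (rule measurable_compose_countable[where f="H n"])
    show "H n k \<in> borel_measurable ((lborel::real measure) \<Otimes>\<^sub>M M)" for k
      unfolding H_def
      by (rule measurable_compose[OF measurable_compose[OF measurable_snd Xm] hm]) simp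
    show "(\<lambda>z. \<lceil>(2::real)^n * max 0 (fst z)\<rceil>) \<in> measurable ((lborel::real measure) \<Otimes>\<^sub>M M) (count_space UNIV)"
      by (rule measurable_compose[OF _ measurable_real_ceiling]) simp
  qed
  fix z assume z: "z \<in> space ((lborel::real measure) \<Otimes>\<^sub>M M)"
  then have zs: "snd z \<in> space M" by (simp add: space_pair_measure mem_Times_iff)
  define s where "s = max 0 (fst z)"
  have s0: "s \<ge> 0" by (simp add: s_def)
  have eq: "u n z = h (X (real_of_int \<lceil>2^n * s\<rceil> / 2^n) (snd z))" for n
  proof -
    have "(0::real) \<le> 2^n * s" using s0 by simp
    then have "0 \<le> \<lceil>(2::real)^n * s\<rceil>" by linarith
    then have "real_of_int \<lceil>2^n * s\<rceil> / 2^n \<ge> 0" by simp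
    then show ?thesis by (simp add: u_def H_def s_def[symmetric])
  qed
  have "(\<lambda>n. X (real_of_int \<lceil>2^n * s\<rceil> / 2^n) (snd z)) \<longlonglongrightarrow> X s (snd z)"
    using rc_seq[OF rc[OF zs s0]] .
  then have "(\<lambda>n. h (X (real_of_int \<lceil>2^n * s\<rceil> / 2^n) (snd z))) \<longlonglongrightarrow> h (X s (snd z))"
    by (rule isCont_tendsto_compose[rotated]) (use hc in \<open>simp add: continuous_on_eq_continuous_at\<close>)
  then show "(\<lambda>n. u n z) \<longlonglongrightarrow> h (X (max 0 (fst z)) (snd z))"
    by (simp add: eq s_def)
qed



lemma joint_meas_swap:
  fixes X :: "real \<Rightarrow> 'w \<Rightarrow> 'e::metric_space" and h :: "'e \<Rightarrow> real"
  assumes Xm: "\<And>t. t \<ge> 0 \<Longrightarrow> X t \<in> borel_measurable M"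
    and rc: "\<And>\<omega> t. \<omega> \<in> space M \<Longrightarrow> t \<ge> 0 \<Longrightarrow> continuous (at_right t) (\<lambda>s. X s \<omega>)"
    and hc: "continuous_on UNIV h"
  shows "(\<lambda>z. h (X (max 0 (snd z)) (fst z))) \<in> borel_measurable (M \<Otimes>\<^sub>M (lborel::real measure))"
proof -
  have "(\<lambda>z. h (X (max 0 (fst z)) (snd z))) \<in> borel_measurable ((lborel::real measure) \<Otimes>\<^sub>M M)"
    by (rule joint_meas[OF Xm rc hc])
  then have "(\<lambda>(x,y). (\<lambda>z. h (X (max 0 (fst z)) (snd z))) (y,x)) \<in> borel_measurable (M \<Otimes>\<^sub>M (lborel::real measure))"
    by (subst (asm) measurable_pair_swap_iff)
  then show ?thesis by (simp add: case_prod_beta')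
qed

lemma lbint_as_integral:
  fixes G :: "real \<Rightarrow> real" and u :: real
  assumes "0 \<le> u"
  shows "(LBINT s=0..u. G s) = (\<integral>s. indicator {0..u} s * G (max 0 s) \<partial>lborel)"
proof -
  have "(LBINT s=0..u. G s) = (LBINT s:{0..u}. G s)"
    using interval_integral_Icc[of 0 u G] assms by (simp add: zero_ereal_def)
  also have "\<dots> = (\<integral>s. indicator {0..u} s * G (max 0 s) \<partial>lborel)"
    unfolding set_lebesgue_integral_def
    by (intro Bochner_Integration.integral_cong refl) (auto simp: indicator_def)
  finally show ?thesis .
qed

lemma D_meas:
  fixes X :: "real \<Rightarrow> 'w \<Rightarrow> 'e::metric_space" and f g :: "'e \<Rightarrow> real"
  assumes Xm: "\<And>t. t \<ge> 0 \<Longrightarrow> X t \<in> borel_measurable M"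
    and rc: "\<And>\<omega> t. \<omega> \<in> space M \<Longrightarrow> t \<ge> 0 \<Longrightarrow> continuous (at_right t) (\<lambda>s. X s \<omega>)"
    and fc: "continuous_on UNIV f" and gc: "continuous_on UNIV g"
    and um: "u \<in> borel_measurable M" and u0: "\<And>\<omega>. \<omega> \<in> space M \<Longrightarrow> 0 \<le> u \<omega>"
  shows "(\<lambda>\<omega>. (LBINT s=0..u \<omega>. f (X s \<omega>)) + g (X (u \<omega>) \<omega>)) \<in> borel_measurable M"
proof -
  have jf: "(\<lambda>z. f (X (max 0 (snd z)) (fst z))) \<in> borel_measurable (M \<Otimes>\<^sub>M (lborel::real measure))"
    by (rule joint_meas_swap[OF Xm rc fc])
  have jg: "(\<lambda>z. g (X (max 0 (fst z)) (snd z))) \<in> borel_measurable ((lborel::real measure) \<Otimes>\<^sub>M M)"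
    by (rule joint_meas[OF Xm rc gc])
  have ind: "(\<lambda>z. indicator {0..u (fst z)} (snd z) :: real) \<in> borel_measurable (M \<Otimes>\<^sub>M (lborel::real measure))"
  proof -
    have "{z \<in> space (M \<Otimes>\<^sub>M (lborel::real measure)). 0 \<le> snd z \<and> snd z \<le> u (fst z)} \<in> sets (M \<Otimes>\<^sub>M (lborel::real measure))"
      using um by measurable
    then have "indicator {z \<in> space (M \<Otimes>\<^sub>M (lborel::real measure)). 0 \<le> snd z \<and> snd z \<le> u (fst z)} \<in> borel_measurable (M \<Otimes>\<^sub>M (lborel::real measure))"
      by (rule borel_measurable_indicator)
    then show ?thesis
      by (subst measurable_cong[where g="indicator {z \<in> space (M \<Otimes>\<^sub>M (lborel::real measure)). 0 \<le> snd z \<and> snd z \<le> u (fst z)}"])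
         (auto simp: indicator_def)
  qed
  have I: "(\<lambda>\<omega>. \<integral>s. indicator {0..u \<omega>} s * f (X (max 0 s) \<omega>) \<partial>lborel) \<in> borel_measurable M"
    using borel_measurable_times[OF ind jf]
    by (intro lborel.borel_measurable_lebesgue_integral) (simp add: case_prod_beta')
  have I2: "(\<lambda>\<omega>. LBINT s=0..u \<omega>. f (X s \<omega>)) \<in> borel_measurable M"
    by (rule measurable_cong[THEN iffD2, OF _ I]) (simp add: lbint_as_integral u0)
  have um': "u \<in> measurable M lborel" using um by simp
  have G: "(\<lambda>\<omega>. g (X (max 0 (u \<omega>)) \<omega>)) \<in> borel_measurable M"
    using measurable_compose[OF measurable_Pair[OF um' measurable_ident] jg] by (simp add: comp_def)
  have G2: "(\<lambda>\<omega>. g (X (u \<omega>) \<omega>)) \<in> borel_measurable M"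
    by (rule measurable_cong[THEN iffD1, OF _ G]) (simp add: u0 max_absorb2)
  show ?thesis using I2 G2 by simp
qed



lemma E_main:
  fixes X :: "real \<Rightarrow> 'w \<Rightarrow> 'e::metric_space" and f g :: "'e \<Rightarrow> real"
    and Q :: "'w measure" and \<mu> :: "'e measure"
  assumes Q: "prob_space Q" and sQ: "sets Q = sets M"
    and Xm: "\<And>t. t \<ge> 0 \<Longrightarrow> X t \<in> borel_measurable M"
    and rc: "\<And>\<omega> t. \<omega> \<in> space M \<Longrightarrow> t \<ge> 0 \<Longrightarrow> continuous (at_right t) (\<lambda>s. X s \<omega>)"
    and fc: "continuous_on UNIV f" and gc: "continuous_on UNIV g"
    and Bf: "\<And>y. \<bar>f y\<bar> \<le> Bf" and Bg: "\<And>y. \<bar>g y\<bar> \<le> Bg"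
    and mu: "prob_space \<mu>" "sets \<mu> = sets borel"
    and tv: "((\<lambda>t. tv_dist (distr Q borel (X t)) \<mu>) \<longlongrightarrow> 0) at_top"
    and cpos: "(\<integral>y. f y \<partial>\<mu>) > 0"
  shows "((\<lambda>T. ereal (\<integral>\<omega>. (LBINT s=0..T. f (X s \<omega>)) + g (X T \<omega>) \<partial>Q)) \<longlongrightarrow> \<infinity>) at_top"
proof -
  interpret Qp: prob_space Q by fact
  interpret mp: prob_space \<mu> by fact
  define c where "c = (\<integral>y. f y \<partial>\<mu>)"
  have c0: "c > 0" using cpos by (simp add: c_def)
  have Bf0: "Bf \<ge> 0" using Bf[of undefined] by simp
  have fl: "- Bf \<le> f y" for y using abs_le_D2[OF Bf[of y]] by linarith
  have gl: "- Bg \<le> g y" for y using abs_le_D2[OF Bg[of y]] by linarith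
  have Bg0: "Bg \<ge> 0" using Bg[of undefined] by simp
  have spQ: "space Q = space M" using sQ by (rule sets_eq_imp_space_eq)
  have XmQ: "X t \<in> borel_measurable Q" if "t \<ge> 0" for t
    using Xm[OF that] sQ by (simp cong: measurable_cong_sets)
  have fm: "f \<in> borel_measurable borel" by (rule borel_measurable_continuous_onI[OF fc])
  have gm: "g \<in> borel_measurable borel" by (rule borel_measurable_continuous_onI[OF gc])
  define m where "m s = (\<integral>\<omega>. f (X s \<omega>) \<partial>Q)" for s
  define N :: nat where "N = nat \<lceil>16 * Bf / c\<rceil> + 1"
  have N0: "N > 0" by (simp add: N_def)
  have NB: "2 * Bf / N \<le> c / 8"
  proof -
    have "real N \<ge> 16 * Bf / c" unfolding N_def by linarith
    then have "c * real N \<ge> 16 * Bf" using c0 by (simp add: field_simps)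
    then show ?thesis using N0 c0 by (simp add: field_simps)
  qed
  have "eventually (\<lambda>t. tv_dist (distr Q borel (X t)) \<mu> < c / (16 * (Bf + 1))) at_top"
    by (rule order_tendstoD(2)[OF tv]) (use c0 Bf0 in simp)
  then obtain S0 where S0: "\<And>t. t \<ge> S0 \<Longrightarrow> tv_dist (distr Q borel (X t)) \<mu> < c / (16 * (Bf + 1))"
    by (auto simp: eventually_at_top_linorder)
  define S where "S = max S0 0"
  have S0': "S \<ge> 0" by (simp add: S_def)
  have mlow: "m s \<ge> c / 2" if s: "s \<ge> S" for s
  proof -
    have s0: "s \<ge> 0" using s S0' by simp
    define \<nu> where "\<nu> = distr Q borel (X s)"
    have np: "prob_space \<nu>" unfolding \<nu>_def by (rule Qp.prob_space_distr[OF XmQ[OF s0]])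
    interpret np: prob_space \<nu> by fact
    have snu: "sets \<nu> = sets \<mu>" using mu by (simp add: \<nu>_def)
    have d: "measure \<mu> A - measure \<nu> A \<le> tv_dist \<nu> \<mu>" if A: "A \<in> sets \<mu>" for A
    proof -
      have "measure \<mu> A - measure \<nu> A \<le> \<bar>measure \<nu> A - measure \<mu> A\<bar>" by simp
      also have "\<dots> \<le> tv_dist \<nu> \<mu>"
        unfolding tv_dist_def
      proof (rule cSUP_upper)
        show "A \<in> sets \<nu>" using A snu by simp
        show "bdd_above ((\<lambda>A. \<bar>measure \<nu> A - measure \<mu> A\<bar>) ` sets \<nu>)"
        proof (rule bdd_aboveI2[where M=1])
          fix B
          have "measure \<nu> B \<le> 1" "measure \<mu> B \<le> 1" by (rule np.prob_le_1, rule mp.prob_le_1)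
          then show "\<bar>measure \<nu> B - measure \<mu> B\<bar> \<le> 1" using measure_nonneg[of \<nu> B] measure_nonneg[of \<mu> B] unfolding abs_le_iff by linarith
        qed
      qed
      finally show ?thesis .
    qed
    have fb: "\<And>y. - Bf \<le> f y \<and> f y \<le> Bf" using Bf by (simp add: abs_le_iff) (smt (verit) Bf abs_le_iff)
    have fmu: "f \<in> borel_measurable \<mu>" using fm mu by (simp cong: measurable_cong_sets)
    have tvb: "c \<le> (\<integral>y. f y \<partial>\<nu>) + (Bf - - Bf) * tv_dist \<nu> \<mu> + (Bf - - Bf) / N"
      unfolding c_def by (rule tv_bound[OF np mu(1) snu fmu fb N0 d])
    have eqm: "(\<integral>y. f y \<partial>\<nu>) = m s"
      unfolding \<nu>_def m_def by (rule integral_distr[OF XmQ[OF s0] fm])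
    have tvs: "tv_dist \<nu> \<mu> < c / (16 * (Bf + 1))" unfolding \<nu>_def using S0[of s] s by (simp add: S_def)
    have "2 * Bf * tv_dist \<nu> \<mu> \<le> 2 * Bf * (c / (16 * (Bf + 1)))"
      using tvs Bf0 by (intro mult_left_mono) auto
    also have "\<dots> \<le> c / 8"
      using c0 Bf0 by (simp add: field_simps)
    finally have "2 * Bf * tv_dist \<nu> \<mu> \<le> c / 8" .
    moreover have "c \<le> m s + 2 * Bf * tv_dist \<nu> \<mu> + 2 * Bf / N" using tvb eqm by simp
    ultimately show ?thesis using NB c0 by linarith
  qed
  have mlow2: "m s \<ge> - Bf" if "s \<ge> 0" for s
  proof -
    have "(\<integral>\<omega>. - Bf \<partial>Q) \<le> m s" unfolding m_def
      by (rule integral_mono)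
         (use Bf fl XmQ[OF that] fm in \<open>auto intro!: Qp.integrable_const_bound[where B=Bf] simp: abs_le_iff\<close>)
    then show ?thesis by (simp add: Qp.prob_space)
  qed
  interpret PS: pair_sigma_finite lborel Q ..
  interpret PS2: pair_sigma_finite Q lborel ..
  have rew: "(\<integral>\<omega>. (LBINT s=0..T. f (X s \<omega>)) + g (X T \<omega>) \<partial>Q) \<ge> c / 2 * (T - S) - Bf * S - Bg"
    if T: "T \<ge> S" for T
  proof -
    have T0: "T \<ge> 0" using T S0' by simp
    define FF where "FF z = indicator {0..T} (fst z) * f (X (max 0 (fst z)) (snd z))" for z :: "real \<times> 'w"
    have jm: "(\<lambda>z. f (X (max 0 (fst z)) (snd z))) \<in> borel_measurable ((lborel::real measure) \<Otimes>\<^sub>M Q)"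
      using joint_meas[OF Xm rc fc] sets_pair_measure_cong[OF refl sQ, of "lborel::real measure"]
      by (simp cong: measurable_cong_sets)
    have FFm: "FF \<in> borel_measurable (lborel \<Otimes>\<^sub>M Q)"
      unfolding FF_def using jm by measurable
    have Rfin: "emeasure (lborel \<Otimes>\<^sub>M Q) ({0..T} \<times> space Q) < \<infinity>"
      using T0 by (simp add: Qp.emeasure_pair_measure_Times Qp.emeasure_space_1)
    have FFi: "integrable (lborel \<Otimes>\<^sub>M Q) FF"
    proof (rule Bochner_Integration.integrable_bound)
      show "integrable (lborel \<Otimes>\<^sub>M Q) (\<lambda>z. Bf * indicator ({0..T} \<times> space Q) z)"
        using Rfin by (intro Bochner_Integration.integrable_mult_right integrable_real_indicator) auto
      show "FF \<in> borel_measurable (lborel \<Otimes>\<^sub>M Q)" by (rule FFm)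
      show "AE z in lborel \<Otimes>\<^sub>M Q. norm (FF z) \<le> norm (Bf * indicator ({0..T} \<times> space Q) z)"
        using Bf Bf0 by (intro AE_I2) (auto simp: FF_def indicator_def space_pair_measure abs_mult)
    qed
    have Fub: "(\<integral>\<omega>. (\<integral>s. FF (s, \<omega>) \<partial>lborel) \<partial>Q) = (\<integral>s. (\<integral>\<omega>. FF (s, \<omega>) \<partial>Q) \<partial>lborel)"
      using PS.Fubini_integral[of "\<lambda>s \<omega>. FF (s, \<omega>)"] FFi by simp
    have inner: "(\<integral>s. FF (s, \<omega>) \<partial>lborel) = (LBINT s=0..T. f (X s \<omega>))" for \<omega>
      using lbint_as_integral[OF T0, of "\<lambda>s. f (X s \<omega>)"] by (simp add: FF_def)
    have i1: "integrable Q (\<lambda>\<omega>. \<integral>s. FF (s, \<omega>) \<partial>lborel)"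
      using PS2.integrable_fst'[OF PS.integrable_product_swap[OF FFi]] by (simp add: case_prod_beta')
    have i1': "integrable Q (\<lambda>\<omega>. LBINT s=0..T. f (X s \<omega>))"
      using i1 by (simp add: inner)
    have i2: "integrable Q (\<lambda>\<omega>. g (X T \<omega>))"
      by (rule Qp.integrable_const_bound[where B=Bg]) (use Bg XmQ[OF T0] gm in auto)
    have i3: "integrable lborel (\<lambda>s. \<integral>\<omega>. FF (s, \<omega>) \<partial>Q)"
      using PS.integrable_fst'[OF FFi] by simp
    define low where "low s = c / 2 * indicator {S..T} s - Bf * indicator {0..S} s" for s :: real
    have ilow: "integrable lborel low" unfolding low_def
      by (intro Bochner_Integration.integrable_diff Bochner_Integration.integrable_mult_right integrable_real_indicator) (auto simp: emeasure_lborel_Icc_eq)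
    have Ilow: "(\<integral>s. low s \<partial>lborel) = c / 2 * (T - S) - Bf * S"
      unfolding low_def using T S0'
      by (subst Bochner_Integration.integral_diff) (auto intro!: integrable_real_indicator simp: emeasure_lborel_Icc_eq)
    have lowle: "low s \<le> (\<integral>\<omega>. FF (s, \<omega>) \<partial>Q)" for s
    proof -
      have eq: "(\<integral>\<omega>. FF (s, \<omega>) \<partial>Q) = indicator {0..T} s * (\<integral>\<omega>. f (X (max 0 s) \<omega>) \<partial>Q)"
        by (simp add: FF_def)
      show ?thesis
      proof (cases "0 \<le> s \<and> s \<le> T")
        case True
        then have ms: "(\<integral>\<omega>. f (X (max 0 s) \<omega>) \<partial>Q) = m s" by (simp add: m_def)
        show ?thesis
        proof (cases "s \<ge> S")
          case True
          then show ?thesis using \<open>0 \<le> s \<and> s \<le> T\<close> mlow[OF True] eq ms Bf0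
            by (auto simp: low_def indicator_def)
        next
          case False
          then show ?thesis using \<open>0 \<le> s \<and> s \<le> T\<close> mlow2[of s] eq ms c0
            by (auto simp: low_def indicator_def)
        qed
      next
        case False
        then show ?thesis using eq S0' Bf0 T by (auto simp: low_def indicator_def)
      qed
    qed
    have "c / 2 * (T - S) - Bf * S \<le> (\<integral>s. (\<integral>\<omega>. FF (s, \<omega>) \<partial>Q) \<partial>lborel)"
      unfolding Ilow[symmetric] by (rule integral_mono[OF ilow i3 lowle])
    also have "\<dots> = (\<integral>\<omega>. (LBINT s=0..T. f (X s \<omega>)) \<partial>Q)"
      using Fub by (simp add: inner)
    finally have A1: "c / 2 * (T - S) - Bf * S \<le> (\<integral>\<omega>. (LBINT s=0..T. f (X s \<omega>)) \<partial>Q)" .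
    have A2: "- Bg \<le> (\<integral>\<omega>. g (X T \<omega>) \<partial>Q)"
    proof -
      have "(\<integral>\<omega>. - Bg \<partial>Q) \<le> (\<integral>\<omega>. g (X T \<omega>) \<partial>Q)"
        by (rule integral_mono[OF _ i2]) (use gl in auto)
      then show ?thesis by (simp add: Qp.prob_space)
    qed
    show ?thesis using A1 A2 i1' i2 by simp
  qed
  show ?thesis
    unfolding tendsto_PInfty
  proof
    fix r :: real
    define T0 where "T0 = max S (S + 2 * (\<bar>r\<bar> + Bf * S + Bg + 1) / c)"
    show "eventually (\<lambda>T. ereal r < ereal (\<integral>\<omega>. (LBINT s=0..T. f (X s \<omega>)) + g (X T \<omega>) \<partial>Q)) at_top"
      unfolding eventually_at_top_linorder
    proof (intro exI allI impI)
      fix T assume T: "T \<ge> T0"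
      then have TS: "T \<ge> S" by (simp add: T0_def)
      have "T - S \<ge> 2 * (\<bar>r\<bar> + Bf * S + Bg + 1) / c" using T by (simp add: T0_def)
      then have "c / 2 * (T - S) \<ge> \<bar>r\<bar> + Bf * S + Bg + 1" using c0 by (simp add: field_simps)
      then show "ereal r < ereal (\<integral>\<omega>. (LBINT s=0..T. f (X s \<omega>)) + g (X T \<omega>) \<partial>Q)"
        using rew[OF TS] by simp
    qed
  qed
qed


lemma u_props:
  fixes \<tau> :: "'w \<Rightarrow> ereal"
  assumes st: "stopping_time_ext M F \<tau>" and filt: "\<And>t. sets (F t) \<subseteq> sets M" and T0: "T \<ge> 0"
  shows "(\<lambda>\<omega>. real_of_ereal (min (\<tau> \<omega>) (ereal T))) \<in> borel_measurable M"
    and "\<And>\<omega>. 0 \<le> real_of_ereal (min (\<tau> \<omega>) (ereal T))"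
proof -
  have t0: "\<And>\<omega>. 0 \<le> \<tau> \<omega>" and stt: "\<And>t. t \<ge> 0 \<Longrightarrow> {\<omega>\<in>space M. \<tau> \<omega> \<le> ereal t} \<in> sets (F t)"
    using st unfolding stopping_time_ext_def by auto
  show u0: "0 \<le> real_of_ereal (min (\<tau> \<omega>) (ereal T))" for \<omega>
    using t0[of \<omega>] T0 by (cases "\<tau> \<omega>") (auto simp: min_def)
  show "(\<lambda>\<omega>. real_of_ereal (min (\<tau> \<omega>) (ereal T))) \<in> borel_measurable M"
  proof (rule borel_measurableI_le)
    fix a :: real
    show "{w \<in> space M. real_of_ereal (min (\<tau> w) (ereal T)) \<le> a} \<in> sets M"
    proof (cases "a < 0")
      case True
      have "\<not> real_of_ereal (min (\<tau> w) (ereal T)) \<le> a" for w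
        using u0[of w] True by linarith
      then have "{w \<in> space M. real_of_ereal (min (\<tau> w) (ereal T)) \<le> a} = {}"
        by auto
      then show ?thesis by (metis sets.empty_sets)
    next
      case False
      show ?thesis
      proof (cases "a \<ge> T")
        case True
        have "{w \<in> space M. real_of_ereal (min (\<tau> w) (ereal T)) \<le> a} = space M"
        proof -
          have "real_of_ereal (min (\<tau> w) (ereal T)) \<le> a" for w
            using t0[of w] T0 True by (cases "\<tau> w") (auto simp: min_def)
          then show ?thesis by auto
        qed
        then show ?thesis by (metis sets.top)
      next
        case aT: False
        have "{w \<in> space M. real_of_ereal (min (\<tau> w) (ereal T)) \<le> a} = {\<omega>\<in>space M. \<tau> \<omega> \<le> ereal a}"
        proof -
          have "real_of_ereal (min (\<tau> w) (ereal T)) \<le> a \<longleftrightarrow> \<tau> w \<le> ereal a" for w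
            using t0[of w] T0 aT False by (cases "\<tau> w") (auto simp: min_def)
          then show ?thesis by auto
        qed
        then show ?thesis using stt[of a] False filt by auto
      qed
    qed
  qed
qed

theorem lemma2p2:
  fixes M :: "'w measure" and F :: "real \<Rightarrow> 'w measure"
    and P :: "'e::{heine_borel, second_countable_topology} \<Rightarrow> 'w measure"
    and X :: "real \<Rightarrow> 'w \<Rightarrow> 'e" and \<mu> :: "'e measure"
    and f g :: "'e \<Rightarrow> real"
  assumes "rc_markov_process M F P X"
    and "ergodic_with P X \<mu>"
    and "continuous_on UNIV f" and "bounded (range f)"
    and "continuous_on UNIV g" and "bounded (range g)"
    and "(\<integral>y. f y \<partial>\<mu>) > 0"
  shows "\<forall>x. value_fun M F P X f g x = \<infinity> \<and>
           (\<forall>\<tau>. stopping_time_ext M F \<tau> \<longrightarrow> (AE \<omega> in P x. \<tau> \<omega> = \<infinity>) \<longrightarrow>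
                 stop_value P X f g x \<tau> = value_fun M F P X f g x)"
proof
  fix x
  have filt: "\<And>t. space (F t) = space M \<and> sets (F t) \<subseteq> sets M"
    and Pp: "prob_space (P x)" "sets (P x) = sets M"
    and XF: "\<And>t. t \<ge> 0 \<Longrightarrow> X t \<in> measurable (F t) borel"
    and rc: "\<And>\<omega> t. \<omega> \<in> space M \<Longrightarrow> t \<ge> 0 \<Longrightarrow> continuous (at_right t) (\<lambda>s. X s \<omega>)"
    using assms(1) unfolding rc_markov_process_def is_filtration_def by auto
  have Xm: "X t \<in> borel_measurable M" if "t \<ge> 0" for t
    using measurable_mono[of borel borel "F t" M] filt[of t] XF[OF that] by auto
  have mu: "prob_space \<mu>" "sets \<mu> = sets borel"
    and tv: "((\<lambda>t. tv_dist (distr (P x) borel (X t)) \<mu>) \<longlongrightarrow> 0) at_top"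
    using assms(2) unfolding ergodic_with_def trans_prob_def by auto
  obtain Bf where Bf: "\<And>y. \<bar>f y\<bar> \<le> Bf" using assms(4) unfolding bounded_iff by auto
  obtain Bg where Bg: "\<And>y. \<bar>g y\<bar> \<le> Bg" using assms(6) unfolding bounded_iff by auto
  define R where "R T = (\<integral>\<omega>. (LBINT s=0..T. f (X s \<omega>)) + g (X T \<omega>) \<partial>P x)" for T
  have lim: "((\<lambda>T. ereal (R T)) \<longlongrightarrow> \<infinity>) at_top"
    unfolding R_def by (rule E_main[OF Pp Xm rc assms(3) assms(5) Bf Bg mu tv assms(7)])
  define tinf where "tinf = (\<lambda>_::'w. \<infinity>::ereal)"
  have rinf: "reward P X f g x tinf T = R T" for T
    by (simp add: reward_def R_def tinf_def)
  have svinf: "stop_value P X f g x tinf = \<infinity>"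
    unfolding stop_value_def rinf by (rule lim_imp_Limsup[OF _ lim]) simp
  have stinf: "stopping_time_ext M F tinf"
    by (simp add: stopping_time_ext_def tinf_def)
  have vf: "value_fun M F P X f g x = \<infinity>"
  proof -
    have "stop_value P X f g x tinf \<le> value_fun M F P X f g x"
      unfolding value_fun_def by (rule SUP_upper) (use stinf in simp)
    then show ?thesis using svinf by simp
  qed
  show "value_fun M F P X f g x = \<infinity> \<and>
           (\<forall>\<tau>. stopping_time_ext M F \<tau> \<longrightarrow> (AE \<omega> in P x. \<tau> \<omega> = \<infinity>) \<longrightarrow>
                 stop_value P X f g x \<tau> = value_fun M F P X f g x)"
  proof (intro conjI allI impI)
    show "value_fun M F P X f g x = \<infinity>" by (rule vf)
    fix \<tau> assume st: "stopping_time_ext M F \<tau>" and ae: "AE \<omega> in P x. \<tau> \<omega> = \<infinity>"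
    have "eventually (\<lambda>T. ereal (reward P X f g x \<tau> T) = ereal (reward P X f g x tinf T)) at_top"
      unfolding eventually_at_top_linorder
    proof (intro exI allI impI)
      fix T :: real assume T0: "T \<ge> 0"
      note up = u_props[OF st _ T0]
      have m1: "(\<lambda>\<omega>. (LBINT s=0..real_of_ereal (min (\<tau> \<omega>) (ereal T)). f (X s \<omega>))
           + g (X (real_of_ereal (min (\<tau> \<omega>) (ereal T))) \<omega>)) \<in> borel_measurable (P x)"
        using D_meas[OF Xm rc assms(3) assms(5) up(1)] up(2) filt Pp(2)
        by (simp cong: measurable_cong_sets)
      have m2: "(\<lambda>\<omega>. (LBINT s=0..real_of_ereal (min (tinf \<omega>) (ereal T)). f (X s \<omega>))
           + g (X (real_of_ereal (min (tinf \<omega>) (ereal T))) \<omega>)) \<in> borel_measurable (P x)"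
        using D_meas[OF Xm rc assms(3) assms(5), of "\<lambda>_. T"] T0 Pp(2)
        by (simp add: tinf_def cong: measurable_cong_sets)
      have "reward P X f g x \<tau> T = reward P X f g x tinf T"
        unfolding reward_def
        by (rule integral_cong_AE[OF m1 m2]) (use ae in \<open>auto simp: tinf_def\<close>)
      then show "ereal (reward P X f g x \<tau> T) = ereal (reward P X f g x tinf T)" by simp
    qed
    then have "stop_value P X f g x \<tau> = stop_value P X f g x tinf"
      unfolding stop_value_def by (rule Limsup_eq)
    then show "stop_value P X f g x \<tau> = value_fun M F P X f g x" using svinf vf by simp
  qed
qed


end
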